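(* Let $0<c<1$ be a constant and $\mu=\mu(n)$ a function with $\mu(n)\to\infty$. For every strategy $\mathcal{S}_1$ there exists a strategy $\mathcal{S}_2$ which is $2\mu$-well-behaved for $cn$ rounds, which never creates a multi-edge (so $G^{\mathcal{S}_2}_{cn}(n)$ is simple), and which satisfies $\mathbb{P}[G^{\mathcal{S}_1}_{cn}(n)\in\mathtt{PM}(\mu,\mu^{-1})]\le\mathbb{P}[G^{\mathcal{S}_2}_{cn}(n)\in\mathtt{PM}(2\mu,\mu^{-1})]$.
   Context: Semi-random graph process: start from the empty graph on $[n]$; in round $t$ a vertex $u_t$ (square) is chosen uniformly at random from $[n]$ independently, the player chooses $v_t$ (circle) based on the history and $u_t$, and the edge $u_tv_t$ is added; $G^{\mathcal{S}}_t(n)$ denotes the graph after $t$ rounds under strategy $\mathcal{S}$, viewed as a directed graph with arc $u_t\to v_t$ for each round. Numbers such as $cn$ are rounded down. A vertex $j$ is covered by the circle of round $t$ if $v_t=j$. A strategy is $\omega$-well-behaved for $cn$ rounds if for all $0\le t\le\lfloor cn\rfloor$ every vertex of $G_t$ is covered by at most $\omega$ circles. For a directed graph $D$ with $m$ arcs on $[n]$, $D\in\mathtt{PM}(\mu,\delta)$ if there is $S\subseteq[n]$ such that $D[S]$ has a perfect matching, every vertex of $S$ has in-degree at most $\mu$ in $D$, and $|S|\ge n-2m\delta$. *)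

theory Defs
  imports Complex_Main
begin

(* Vertex set [n] is rendered as {..<n}.  A (deterministic) strategy maps the
   history (chronological list of arcs (u_s, v_s) of previous rounds) and the
   current square u_t to the circle v_t. *)
type_synonym strategy = "(nat \<times> nat) list \<Rightarrow> nat \<Rightarrow> nat"

definition valid_strategy :: "nat \<Rightarrow> strategy \<Rightarrow> bool" where
  "valid_strategy n S \<longleftrightarrow> (\<forall>h u. u < n \<longrightarrow> S h u < n)"

fun play_aux :: "strategy \<Rightarrow> (nat \<times> nat) list \<Rightarrow> nat list \<Rightarrow> (nat \<times> nat) list" where
  "play_aux S h [] = h"
| "play_aux S h (u # us) = play_aux S (h @ [(u, S h u)]) us"

definition play :: "strategy \<Rightarrow> nat list \<Rightarrow> (nat \<times> nat) list" where
  "play S us = play_aux S [] us"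

(* all square sequences of length T on [n]; each has probability n^(-T) *)
definition squares :: "nat \<Rightarrow> nat \<Rightarrow> nat list set" where
  "squares n T = {us. length us = T \<and> set us \<subseteq> {..<n}}"

definition prob_graph :: "nat \<Rightarrow> nat \<Rightarrow> strategy \<Rightarrow> ((nat \<times> nat) list \<Rightarrow> bool) \<Rightarrow> real" where
  "prob_graph n T S P = real (card {us \<in> squares n T. P (play S us)}) / real n ^ T"

(* number of circles on j = in-degree of j *)
definition indeg :: "(nat \<times> nat) list \<Rightarrow> nat \<Rightarrow> nat" where
  "indeg D j = length (filter (\<lambda>a. snd a = j) D)"

definition well_behaved :: "nat \<Rightarrow> real \<Rightarrow> nat \<Rightarrow> strategy \<Rightarrow> bool" where
  "well_behaved n \<omega> T S \<longleftrightarrow>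
     (\<forall>us \<in> squares n T. \<forall>t \<le> T. \<forall>j < n. real (indeg (take t (play S us)) j) \<le> \<omega>)"

definition simple_strategy :: "nat \<Rightarrow> nat \<Rightarrow> strategy \<Rightarrow> bool" where
  "simple_strategy n T S \<longleftrightarrow>
     (\<forall>us \<in> squares n T.
        (\<forall>(u, v) \<in> set (play S us). u \<noteq> v) \<and>
        distinct (map (\<lambda>(u, v). {u, v}) (play S us)))"

definition has_pm_on :: "(nat \<times> nat) list \<Rightarrow> nat set \<Rightarrow> bool" where
  "has_pm_on D S \<longleftrightarrow>
     (\<exists>M \<subseteq> set D. (\<forall>(u, v) \<in> M. u \<in> S \<and> v \<in> S \<and> u \<noteq> v) \<and>
                   (\<forall>x \<in> S. \<exists>!e \<in> M. x = fst e \<or> x = snd e))"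

definition PM :: "nat \<Rightarrow> real \<Rightarrow> real \<Rightarrow> (nat \<times> nat) list \<Rightarrow> bool" where
  "PM n \<mu> \<delta> D \<longleftrightarrow>
     (\<exists>S \<subseteq> {..<n}. has_pm_on D S \<and> (\<forall>v \<in> S. real (indeg D v) \<le> \<mu>) \<and>
                    real (card S) \<ge> real n - 2 * real (length D) * \<delta>)"

end

theory Submission
  imports Defs
begin

abbreviation ek :: "nat \<times> nat \<Rightarrow> nat set" where "ek \<equiv> (\<lambda>(u, v). {u, v})"

lemma play_aux_append: "play_aux S h (xs @ ys) = play_aux S (play_aux S h xs) ys"
  by (induction xs arbitrary: h) auto
lemma play_Nil[simp]: "play S [] = []" by (simp add: play_def)
lemma play_snoc: "play S (xs @ [x]) = play S xs @ [(x, S (play S xs) x)]"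
  unfolding play_def by (simp add: play_aux_append)
lemma length_play[simp]: "length (play S xs) = length xs"
  by (induction xs rule: rev_induct) (auto simp: play_snoc)
lemma map_fst_play[simp]: "map fst (play S xs) = xs"
  by (induction xs rule: rev_induct) (auto simp: play_snoc)
lemma take_play: "take k (play S xs) = play S (take k xs)"
proof (induction xs rule: rev_induct)
  case (snoc x xs) then show ?case
    by (cases "k \<le> length xs") (auto simp: play_snoc take_append)
qed simp
lemma nth_play: assumes "t < length xs"
  shows "play S xs ! t = (xs ! t, S (play S (take t xs)) (xs ! t))"
proof -
  have "play S xs ! t = take (Suc t) (play S xs) ! t" by simp
  also have "\<dots> = play S (take t xs @ [xs ! t]) ! t"
    by (simp add: take_play take_Suc_conv_app_nth[OF assms])
  also have "\<dots> = (xs ! t, S (play S (take t xs)) (xs ! t))"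
    using assms by (simp add: play_snoc nth_append)
  finally show ?thesis .
qed

lemma indeg_append: "indeg (xs @ ys) j = indeg xs j + indeg ys j"
  by (simp add: indeg_def)
lemma indeg_snoc: "indeg (h @ [(x, w)]) j = indeg h j + (if w = j then 1 else 0)"
  by (simp add: indeg_def)
lemma indeg_Nil[simp]: "indeg [] j = 0" by (simp add: indeg_def)
lemma indeg_take_le: "indeg (take k D) j \<le> indeg D j"
  by (metis append_take_drop_id indeg_append le_add1)
lemma sum_indeg: "(\<Sum>w\<in>K. indeg h w) \<le> length h"
proof (induction h)
  case Nil then show ?case by simp
next
  case (Cons a h)
  have e: "\<And>w. indeg (a # h) w = (if snd a = w then 1 else 0) + indeg h w"
    by (simp add: indeg_def)
  have "(\<Sum>w\<in>K. indeg (a # h) w) = (\<Sum>w\<in>K. (if snd a = w then 1 else 0)) + (\<Sum>w\<in>K. indeg h w)"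
    by (simp add: e sum.distrib)
  also have "(\<Sum>w\<in>K. (if snd a = w then 1 else 0)::nat) \<le> 1"
    by (cases "finite K") (simp_all add: sum.delta)
  finally show ?case using Cons by simp
qed

definition okalt :: "nat \<Rightarrow> real \<Rightarrow> (nat \<times> nat) list \<Rightarrow> nat \<Rightarrow> nat \<Rightarrow> bool" where
  "okalt n m h u w \<longleftrightarrow> w < n \<and> w \<noteq> u \<and> {u, w} \<notin> set (map ek h) \<and> real (indeg h w) + 1 \<le> m"
definition copyok :: "real \<Rightarrow> (nat \<times> nat) list \<Rightarrow> nat \<Rightarrow> nat \<Rightarrow> bool" where
  "copyok m h u v \<longleftrightarrow> v \<noteq> u \<and> {u, v} \<notin> set (map ek h) \<and> real (indeg h v) + 1 \<le> 2 * m"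
definition S2 :: "nat \<Rightarrow> real \<Rightarrow> strategy \<Rightarrow> strategy" where
  "S2 n m S1 h u = (let v = S1 (play S1 (map fst h)) u in
     if copyok m h u v then v else if (\<exists>w. okalt n m h u w) then (SOME w. okalt n m h u w) else u)"

lemma alt_exists:
  assumes m: "1 < m" and big: "real T + real T / (m - 1) < real n"
    and lh: "length h < T" and u: "u < n"
  shows "\<exists>w. okalt n m h u w"
proof (rule ccontr)
  assume na: "\<not> ?thesis"
  define N where "N = (\<lambda>a. if fst a = u then snd a else fst a) ` set h"
  define K where "K = {w \<in> {..<n}. m < real (indeg h w) + 1}"
  have sub: "{..<n} \<subseteq> {u} \<union> N \<union> K"
  proof
    fix w assume w: "w \<in> {..<n}"
    show "w \<in> {u} \<union> N \<union> K"
    proof (cases "w = u \<or> m < real (indeg h w) + 1")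
      case True then show ?thesis using w K_def by auto
    next
      case False
      then have "{u, w} \<in> set (map ek h)" using na w unfolding okalt_def by auto
      then obtain p q where a: "(p, q) \<in> set h" "{u, w} = {p, q}" by auto
      then have "w \<in> N" unfolding N_def using False
        by (auto simp: doubleton_eq_iff intro!: rev_image_eqI[of "(p, q)"])
      then show ?thesis by simp
    qed
  qed
  have cN: "card N \<le> length h" unfolding N_def
    by (metis card_image_le card_length finite_set le_trans)
  have "(\<Sum>w\<in>K. m - 1) \<le> (\<Sum>w\<in>K. real (indeg h w))"
    by (rule sum_mono) (auto simp: K_def)
  also have "\<dots> = real (\<Sum>w\<in>K. indeg h w)" by simp
  also have "\<dots> \<le> real (length h)" using sum_indeg[of h K] by linarith
  finally have "real (card K) * (m - 1) \<le> real (length h)" by simp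
  then have cK: "real (card K) \<le> real T / (m - 1)" using m lh
    by (simp add: field_simps)
  have "n = card {..<n}" by simp
  also have "\<dots> \<le> card ({u} \<union> N \<union> K)"
    by (rule card_mono[OF _ sub]) (auto simp: N_def K_def)
  also have "\<dots> \<le> 1 + card N + card K"
  proof -
    have "card ({u} \<union> N \<union> K) \<le> card ({u} \<union> N) + card K" by (rule card_Un_le)
    moreover have "card ({u} \<union> N) \<le> card {u} + card N" by (rule card_Un_le)
    ultimately show ?thesis by simp
  qed
  finally have "real n \<le> 1 + real (length h) + real T / (m - 1)" using cN cK by linarith
  then show False using big lh by linarith
qed
lemma S2_cases:
  assumes alt: "\<exists>w. okalt n m h u w"
  shows "(copyok m h u (S1 (play S1 (map fst h)) u) \<and> S2 n m S1 h u = S1 (play S1 (map fst h)) u) \<or>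
         (okalt n m h u (S2 n m S1 h u) \<and> \<not> copyok m h u (S1 (play S1 (map fst h)) u))"
proof (cases "copyok m h u (S1 (play S1 (map fst h)) u)")
  case True then show ?thesis by (simp add: S2_def Let_def)
next
  case False
  then have "S2 n m S1 h u = (SOME w. okalt n m h u w)" using alt by (simp add: S2_def Let_def)
  then show ?thesis using False someI_ex[OF alt] by simp
qed

lemma inv:
  assumes m: "1 < m" and big: "real T + real T / (m - 1) < real n"
  shows "set xs \<subseteq> {..<n} \<Longrightarrow> length xs \<le> T \<Longrightarrow>
    (\<forall>j. real (indeg (play (S2 n m S1) xs) j) \<le> 2 * m) \<and>
    (\<forall>j. real (indeg (play (S2 n m S1) xs) j) \<le> m + real (indeg (play S1 xs) j)) \<and>
    (\<forall>(u, v)\<in>set (play (S2 n m S1) xs). u \<noteq> v) \<and>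
    distinct (map ek (play (S2 n m S1) xs))"
proof (induction xs rule: rev_induct)
  case Nil then show ?case using m by simp
next
  case (snoc x xs)
  define h where "h = play (S2 n m S1) xs"
  define g where "g = play S1 xs"
  define v where "v = S1 g x"
  define w where "w = S2 n m S1 h x"
  have IH: "(\<forall>j. real (indeg h j) \<le> 2 * m) \<and>
    (\<forall>j. real (indeg h j) \<le> m + real (indeg g j)) \<and>
    (\<forall>(u, v)\<in>set h. u \<noteq> v) \<and> distinct (map ek h)"
    using snoc unfolding h_def g_def by simp
  have x: "x < n" "length xs < T" using snoc.prems by auto
  have "\<exists>w. okalt n m h x w" by (rule alt_exists[OF m big]) (use x h_def in auto)
  from S2_cases[OF this, of S1] have C: "(copyok m h x v \<and> w = v) \<or> (okalt n m h x w \<and> \<not> copyok m h x v)"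
    unfolding w_def v_def g_def h_def by simp
  have e1: "play (S2 n m S1) (xs @ [x]) = h @ [(x, w)]" by (simp add: play_snoc h_def w_def)
  have e2: "play S1 (xs @ [x]) = g @ [(x, v)]" by (simp add: play_snoc g_def v_def)
  have C'': "(w = v \<and> real (indeg h v) + 1 \<le> 2 * m) \<or> real (indeg h w) + 1 \<le> m"
    using C unfolding okalt_def copyok_def by blast
  have a: "real (indeg (h @ [(x, w)]) j) \<le> 2 * m" for j
  proof -
    have hj: "real (indeg h j) \<le> 2 * m" using IH by blast
    show ?thesis using C'' hj m unfolding indeg_snoc by (cases "w = j") auto
  qed
  have C': "w = v \<or> real (indeg h w) + 1 \<le> m" using C unfolding okalt_def by auto
  have b: "real (indeg (h @ [(x, w)]) j) \<le> m + real (indeg (g @ [(x, v)]) j)" for j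
  proof -
    have hj: "real (indeg h j) \<le> m + real (indeg g j)" using IH by blast
    show ?thesis using C' hj unfolding indeg_snoc by (cases "w = j"; cases "v = j") auto
  qed
  have c: "x \<noteq> w" "{x, w} \<notin> set (map ek h)"
    using C unfolding copyok_def okalt_def by blast+
  have d: "\<forall>(u, v)\<in>set (h @ [(x, w)]). u \<noteq> v" using IH c by auto
  have f: "distinct (map ek (h @ [(x, w)]))" using IH c by simp
  show ?case unfolding e1 e2 using a b d f by blast
qed


lemma edge_kept:
  assumes m: "1 < m" and big: "real T + real T / (m - 1) < real n"
    and us: "set us \<subseteq> {..<n}" "length us \<le> T"
    and a: "(u, v) \<in> set (play S1 us)" "u \<noteq> v" "real (indeg (play S1 us) v) \<le> m"
  shows "{u, v} \<in> set (map ek (play (S2 n m S1) us))"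
proof -
  obtain t where t0: "t < length (play S1 us)" "play S1 us ! t = (u, v)"
    using a(1) unfolding in_set_conv_nth by blast
  then have t: "t < length us" "play S1 us ! t = (u, v)" by simp_all
  define xs where "xs = take t us"
  define h where "h = play (S2 n m S1) xs"
  have "(u, v) = (us ! t, S1 (play S1 xs) (us ! t))" unfolding t(2)[symmetric] xs_def by (rule nth_play[OF t(1)])
  then have uv1: "u = us ! t" and v1: "v = S1 (play S1 xs) (us ! t)" by simp_all
  from v1 have "v = S1 (play S1 xs) u" by (simp only: uv1)
  note uv = uv1 this
  have n2: "play (S2 n m S1) us ! t = (u, S2 n m S1 h u)" using nth_play[OF t(1), of "S2 n m S1"] uv
    by (simp add: xs_def h_def)
  have xs: "set xs \<subseteq> {..<n}" "length xs \<le> T" using us by (auto simp: xs_def dest: in_set_takeD)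
  have I: "real (indeg h v) \<le> m + real (indeg (play S1 xs) v)"
    using inv[OF m big xs, of S1] by (simp add: h_def)
  have "take (Suc t) us = xs @ [u]" unfolding xs_def uv1 by (rule take_Suc_conv_app_nth[OF t(1)])
  then have "play S1 (take (Suc t) us) = play S1 xs @ [(u, v)]" by (simp add: play_snoc uv(2))
  then have "indeg (play S1 xs) v + 1 = indeg (play S1 (take (Suc t) us)) v"
    by (simp add: indeg_snoc)
  also have "\<dots> \<le> indeg (play S1 us) v"
    using indeg_take_le[of "Suc t" "play S1 us" v] by (simp add: take_play)
  finally have "real (indeg h v) + 1 \<le> 2 * m" using I a(3) by linarith
  then have hv: "real (indeg h v) + 1 \<le> 2 * m" .
  show ?thesis
  proof (cases "{u, v} \<in> set (map ek h)")
    case True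
    have "set h \<subseteq> set (play (S2 n m S1) us)" unfolding h_def xs_def
      using set_take_subset[of t "play (S2 n m S1) us"] by (simp add: take_play)
    then have "set (map ek h) \<subseteq> set (map ek (play (S2 n m S1) us))" by auto
    then show ?thesis using True by blast
  next
    case False
    have "copyok m h u v" unfolding copyok_def using False hv a(2) by blast
    moreover have "S1 (play S1 (map fst h)) u = v" using uv(2) by (simp add: h_def)
    ultimately have "S2 n m S1 h u = v" unfolding S2_def Let_def by simp
    then have "(u, v) \<in> set (play (S2 n m S1) us)" using n2 t(1)
      using nth_mem[of t "play (S2 n m S1) us"] by simp
    then show ?thesis by (auto intro: rev_image_eqI[of "(u, v)"])
  qed
qed


lemma valid_S2: "valid_strategy n S1 \<Longrightarrow> valid_strategy n (S2 n m S1)"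
  unfolding valid_strategy_def
proof (intro allI impI)
  fix h u assume v: "\<forall>h u. u < n \<longrightarrow> S1 h u < n" and u: "u < n"
  show "S2 n m S1 h u < n"
  proof (cases "\<exists>w. okalt n m h u w")
    case True
    then have "okalt n m h u (SOME w. okalt n m h u w)" by (rule someI_ex)
    then have A: "(SOME w. okalt n m h u w) < n" by (simp add: okalt_def)
    have B: "S1 (play S1 (map fst h)) u < n" using v u by blast
    show ?thesis unfolding S2_def Let_def using A B True by simp
  next
    case False
    have B: "S1 (play S1 (map fst h)) u < n" using v u by blast
    have "\<not> (\<exists>w. okalt n m h u w)" using False .
    then show ?thesis unfolding S2_def Let_def using B u by auto
  qed
qed

lemma pm_transfer:
  assumes m: "1 < m" and big: "real T + real T / (m - 1) < real n"
    and us: "us \<in> squares n T" and P: "PM n m \<delta> (play S1 us)"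
  shows "PM n (2 * m) \<delta> (play (S2 n m S1) us)"
proof -
  define G1 where "G1 = play S1 us"
  define G2 where "G2 = play (S2 n m S1) us"
  have us': "set us \<subseteq> {..<n}" "length us \<le> T" using us by (auto simp: squares_def)
  obtain S where S: "S \<subseteq> {..<n}" "has_pm_on G1 S" "\<forall>v\<in>S. real (indeg G1 v) \<le> m"
    "real (card S) \<ge> real n - 2 * real (length G1) * \<delta>"
    using P unfolding PM_def G1_def by blast
  obtain M where M: "M \<subseteq> set G1" "\<forall>(u, v)\<in>M. u \<in> S \<and> v \<in> S \<and> u \<noteq> v"
    "\<forall>x\<in>S. \<exists>!e\<in>M. x = fst e \<or> x = snd e"
    using S(2) unfolding has_pm_on_def by blast
  have I: "(\<forall>j. real (indeg G2 j) \<le> 2 * m) \<and> (\<forall>(u, v)\<in>set G2. u \<noteq> v) \<and> distinct (map ek G2)"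
    using inv[OF m big us', of S1] unfolding G2_def by blast
  have inj: "inj_on ek (set G2)" using I distinct_map by blast
  define M' where "M' = {a \<in> set G2. \<exists>e\<in>M. ek a = ek e}"
  have ekf: "ek a = {fst a, snd a}" for a :: "nat \<times> nat" by (cases a) simp
  have kept: "ek e \<in> ek ` set G2" if "e \<in> M" for e
  proof -
    obtain p q where e: "e = (p, q)" by (cases e)
    have pq: "(p, q) \<in> set G1" "p \<in> S" "q \<in> S" "p \<noteq> q" using M that e by auto
    have q: "real (indeg (play S1 us) q) \<le> m" using S(3) pq(3) unfolding G1_def by blast
    have pq1: "(p, q) \<in> set (play S1 us)" using pq(1) unfolding G1_def .
    have "{p, q} \<in> set (map ek G2)"
      unfolding G2_def by (rule edge_kept[OF m big us' pq1 pq(4) q])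
    then show ?thesis using e by simp
  qed
  have "has_pm_on G2 S"
    unfolding has_pm_on_def
  proof (intro exI[of _ M'] conjI)
    show "M' \<subseteq> set G2" by (auto simp: M'_def)
    show "\<forall>(u, v)\<in>M'. u \<in> S \<and> v \<in> S \<and> u \<noteq> v"
    proof (clarify)
      fix u v assume uv: "(u, v) \<in> M'"
      then obtain e where e: "e \<in> M" "{u, v} = ek e" and uvG: "(u, v) \<in> set G2"
        unfolding M'_def by auto
      obtain p q where pq: "e = (p, q)" by (cases e)
      have "p \<in> S \<and> q \<in> S" using M(2) e(1) unfolding pq by blast
      moreover have "{u, v} = {p, q}" using e(2) pq by simp
      moreover have "\<forall>(u, v)\<in>set G2. u \<noteq> v" using I by blast
      then have "u \<noteq> v" using uvG by fastforce
      moreover have "u \<in> {u, v}" "v \<in> {u, v}" by simp_all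
      ultimately show "u \<in> S \<and> v \<in> S \<and> u \<noteq> v" by (metis empty_iff insert_iff)
    qed
    show "\<forall>x\<in>S. \<exists>!a\<in>M'. x = fst a \<or> x = snd a"
    proof
      fix x assume x: "x \<in> S"
      have "\<exists>!e. e \<in> M \<and> (x = fst e \<or> x = snd e)" using M(3) x by blast
      then obtain e where e: "e \<in> M" "x = fst e \<or> x = snd e"
        and eu: "\<And>e'. e' \<in> M \<Longrightarrow> x = fst e' \<or> x = snd e' \<Longrightarrow> e' = e"
        by (elim ex1E) blast
      obtain a where a: "a \<in> set G2" "ek a = ek e" using kept[OF e(1)] by auto
      have aM: "a \<in> M'" using a e(1) by (auto simp: M'_def)
      have "x \<in> ek e" using e(2) unfolding ekf by blast
      then have "x \<in> ek a" using a(2) by simp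
      then have ax: "x = fst a \<or> x = snd a" unfolding ekf by blast
      show "\<exists>!a\<in>M'. x = fst a \<or> x = snd a"
      proof (rule ex1I[of _ a])
        show "a \<in> M' \<and> (x = fst a \<or> x = snd a)" using aM ax by blast
        fix b assume b: "b \<in> M' \<and> (x = fst b \<or> x = snd b)"
        then obtain e' where e': "e' \<in> M" "ek b = ek e'" "b \<in> set G2" by (auto simp: M'_def)
        have "x \<in> ek b" using b unfolding ekf by blast
        then have "x \<in> ek e'" using e'(2) by simp
        then have "x = fst e' \<or> x = snd e'" unfolding ekf by blast
        then have "e' = e" using eu e'(1) by blast
        then have "ek b = ek a" using e'(2) a(2) by simp
        then show "b = a" using inj_onD[OF inj _ e'(3) a(1)] by blast
      qed
    qed
  qed
  moreover have "\<forall>v\<in>S. real (indeg G2 v) \<le> 2 * m" using I by blast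
  moreover have "length G2 = length G1" by (simp add: G1_def G2_def)
  ultimately show ?thesis using S(1,4) unfolding PM_def G2_def[symmetric] by (intro exI[of _ S]) simp
qed

lemma main_n:
  assumes valid: "valid_strategy n S1" and m: "1 < m" and big: "real T + real T / (m - 1) < real n"
  shows "valid_strategy n (S2 n m S1) \<and> well_behaved n (2 * m) T (S2 n m S1) \<and>
    simple_strategy n T (S2 n m S1) \<and>
    prob_graph n T S1 (PM n m (1 / m)) \<le> prob_graph n T (S2 n m S1) (PM n (2 * m) (1 / m))"
proof (intro conjI)
  show "valid_strategy n (S2 n m S1)" using valid by (rule valid_S2)
  show "well_behaved n (2 * m) T (S2 n m S1)"
    unfolding well_behaved_def
  proof (intro ballI allI impI)
    fix us t j assume us: "us \<in> squares n T" and t: "t \<le> T" and j: "j < n"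
    have "set (take t us) \<subseteq> {..<n}" "length (take t us) \<le> T" using us t
      by (auto simp: squares_def dest: in_set_takeD)
    from inv[OF m big this, of S1]
    show "real (indeg (take t (play (S2 n m S1) us)) j) \<le> 2 * m" by (simp add: take_play)
  qed
  show "simple_strategy n T (S2 n m S1)"
    unfolding simple_strategy_def
  proof
    fix us assume us: "us \<in> squares n T"
    have "set us \<subseteq> {..<n}" "length us \<le> T" using us by (auto simp: squares_def)
    from inv[OF m big this, of S1]
    show "(\<forall>(u, v)\<in>set (play (S2 n m S1) us). u \<noteq> v) \<and> distinct (map ek (play (S2 n m S1) us))"
      by blast
  qed
  have fin: "finite (squares n T)"
    using finite_lists_length_eq[of "{..<n}" T] by (simp add: squares_def conj_commute)
  have "card {us \<in> squares n T. PM n m (1 / m) (play S1 us)}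
        \<le> card {us \<in> squares n T. PM n (2 * m) (1 / m) (play (S2 n m S1) us)}"
    by (rule card_mono) (use fin pm_transfer[OF m big] in auto)
  then show "prob_graph n T S1 (PM n m (1 / m)) \<le> prob_graph n T (S2 n m S1) (PM n (2 * m) (1 / m))"
    unfolding prob_graph_def by (intro divide_right_mono) auto
qed



theorem proposition9:
  fixes c :: real and \<mu> :: "nat \<Rightarrow> real"
  assumes "0 < c" "c < 1"
    and "filterlim \<mu> at_top sequentially"
  shows "\<forall>\<^sub>F n in sequentially.
           \<forall>S1. valid_strategy n S1 \<longrightarrow>
             (\<exists>S2. valid_strategy n S2 \<and>
                   well_behaved n (2 * \<mu> n) (nat \<lfloor>c * real n\<rfloor>) S2 \<and>
                   simple_strategy n (nat \<lfloor>c * real n\<rfloor>) S2 \<and>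
                   prob_graph n (nat \<lfloor>c * real n\<rfloor>) S1 (PM n (\<mu> n) (1 / \<mu> n))
                   \<le> prob_graph n (nat \<lfloor>c * real n\<rfloor>) S2 (PM n (2 * \<mu> n) (1 / \<mu> n)))"
proof -
  have ev1: "\<forall>\<^sub>F n in sequentially. 2 / (1 - c) \<le> \<mu> n"
    using assms(3) unfolding filterlim_at_top by blast
  have ev2: "\<forall>\<^sub>F n in sequentially. (1::nat) \<le> n" by (rule eventually_ge_at_top)
  have good: "1 < \<mu> n \<and> real (nat \<lfloor>c * real n\<rfloor>) + real (nat \<lfloor>c * real n\<rfloor>) / (\<mu> n - 1) < real n"
    if mu: "2 / (1 - c) \<le> \<mu> n" and n1: "1 \<le> n" for n
  proof -
    define m where "m = \<mu> n"
    define T where "T = nat \<lfloor>c * real n\<rfloor>"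
    have c1: "0 < 1 - c" using assms(2) by simp
    have "2 < 2 / (1 - c)" using c1 assms(1) by (simp add: field_simps)
    then have m1: "1 < m" using mu m_def by simp
    have "(1 - c) * (m - 1) \<ge> (1 - c) * (2 / (1 - c) - 1)"
      using mu m_def c1 by (intro mult_left_mono) auto
    also have "(1 - c) * (2 / (1 - c) - 1) = 1 + c" using c1 by (simp add: field_simps)
    finally have key: "c < (1 - c) * (m - 1)" by simp
    have cn: "0 \<le> c * real n" using assms(1) by simp
    have T: "real T \<le> c * real n" unfolding T_def using cn by linarith
    have np: "0 < real n" using n1 by simp
    have "real T / (m - 1) \<le> c * real n / (m - 1)"
      using T m1 by (simp add: divide_right_mono)
    also have "\<dots> < (1 - c) * real n"
    proof -
      have "c * real n < ((1 - c) * (m - 1)) * real n" using key np by (rule mult_strict_right_mono)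
      then have "c * real n < (1 - c) * real n * (m - 1)" by (simp add: algebra_simps)
      then show ?thesis using m1 by (simp add: pos_divide_less_eq)
    qed
    finally have "real T + real T / (m - 1) < c * real n + (1 - c) * real n" using T by linarith
    also have "\<dots> = real n" by (simp add: algebra_simps)
    finally show ?thesis using m1 unfolding m_def T_def by simp
  qed
  show ?thesis
  proof (rule eventually_mono[OF eventually_conj[OF ev1 ev2]])
    fix n assume "2 / (1 - c) \<le> \<mu> n \<and> 1 \<le> n"
    then have g: "1 < \<mu> n" "real (nat \<lfloor>c * real n\<rfloor>) + real (nat \<lfloor>c * real n\<rfloor>) / (\<mu> n - 1) < real n"
      using good by blast+
    show "\<forall>S1. valid_strategy n S1 \<longrightarrow>
             (\<exists>S2. valid_strategy n S2 \<and>
                   well_behaved n (2 * \<mu> n) (nat \<lfloor>c * real n\<rfloor>) S2 \<and>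
                   simple_strategy n (nat \<lfloor>c * real n\<rfloor>) S2 \<and>
                   prob_graph n (nat \<lfloor>c * real n\<rfloor>) S1 (PM n (\<mu> n) (1 / \<mu> n))
                   \<le> prob_graph n (nat \<lfloor>c * real n\<rfloor>) S2 (PM n (2 * \<mu> n) (1 / \<mu> n)))"
    proof (intro allI impI)
      fix S1 assume "valid_strategy n S1"
      from main_n[OF this g]
      show "\<exists>S2. valid_strategy n S2 \<and>
                   well_behaved n (2 * \<mu> n) (nat \<lfloor>c * real n\<rfloor>) S2 \<and>
                   simple_strategy n (nat \<lfloor>c * real n\<rfloor>) S2 \<and>
                   prob_graph n (nat \<lfloor>c * real n\<rfloor>) S1 (PM n (\<mu> n) (1 / \<mu> n))
                   \<le> prob_graph n (nat \<lfloor>c * real n\<rfloor>) S2 (PM n (2 * \<mu> n) (1 / \<mu> n))"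
        by blast
    qed
  qed
qed
end
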